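(* Let $p$ be a probability density on $\mathbb{R}^d$, $\tau>0$, $y\in\mathbb{R}^d$, and consider the recursion $x_{k+1}=\alpha_k\,\mathrm{MMSE}_{\sigma_k}(x_k)+(1-\alpha_k)y$ with $\alpha_k=\frac{k+1}{k+2}$ and $\sigma_k^2=\frac{\tau}{k+1}$. Then for every $k\ge0$, $$x_{k+1}=x_k-\gamma_k\nabla F_{\sigma_k}(x_k),\qquad F_{\sigma_k}(x):=\tfrac12\|y-x\|^2-\tau\ln p_{\sigma_k}(x),\qquad \gamma_k=\frac{1}{k+2}.$$
   Context: For $\sigma>0$, $p_\sigma$ denotes the density of $X+\sigma\varepsilon$ where $X\sim p$ and $\varepsilon\sim\mathcal N(0,I_d)$ are independent; $p_\sigma$ is smooth and positive. $\mathrm{MMSE}_\sigma(z):=\mathbb{E}[X\mid X+\sigma\varepsilon=z]$. *)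

theory Defs
  imports "HOL-Analysis.Analysis"
begin

definition gauss_density :: "real \<Rightarrow> 'a::euclidean_space \<Rightarrow> real" where
  "gauss_density \<sigma> u =
     (2 * pi * \<sigma>\<^sup>2) powr (- real DIM('a) / 2) * exp (- (norm u)\<^sup>2 / (2 * \<sigma>\<^sup>2))"

definition prob_density :: "('a::euclidean_space \<Rightarrow> real) \<Rightarrow> bool" where
  "prob_density p \<longleftrightarrow> p \<in> borel_measurable lborel \<and> (\<forall>x. 0 \<le> p x)
      \<and> integrable lborel p \<and> (\<integral>x. p x \<partial>lborel) = 1"

text \<open>p_sigma: density of X + sigma*eps, X ~ p, eps ~ N(0,I) independent (convolution).\<close>
definition smoothed_density :: "('a::euclidean_space \<Rightarrow> real) \<Rightarrow> real \<Rightarrow> 'a \<Rightarrow> real" where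
  "smoothed_density p \<sigma> z = (\<integral>x. p x * gauss_density \<sigma> (z - x) \<partial>lborel)"

text \<open>MMSE_sigma(z) = E[X | X + sigma*eps = z], given pointwise by Bayes' formula
  (the posterior density of X given X + sigma*eps = z is p(x) phi_sigma(z-x) / p_sigma(z)).\<close>
definition MMSE :: "('a::euclidean_space \<Rightarrow> real) \<Rightarrow> real \<Rightarrow> 'a \<Rightarrow> 'a" where
  "MMSE p \<sigma> z = (\<integral>x. (p x * gauss_density \<sigma> (z - x) / smoothed_density p \<sigma> z) *\<^sub>R x \<partial>lborel)"

definition grad :: "('a::euclidean_space \<Rightarrow> real) \<Rightarrow> 'a \<Rightarrow> 'a" where
  "grad f x = (THE g. (f has_derivative (\<lambda>h. g \<bullet> h)) (at x))"

end

theory Submission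
  imports Defs
begin

lemma uexp_le: "(u::real) \<ge> 0 \<Longrightarrow> u * exp (- u) \<le> 1"
proof -
  assume "u \<ge> 0"
  have "u \<le> exp u" using exp_ge_add_one_self[of u] by linarith
  then show ?thesis by (simp add: exp_minus field_simps)
qed

lemma gauss_taylor:
  fixes w h :: "'a::euclidean_space" and \<beta> :: real
  assumes b: "\<beta> > 0"
  shows "\<bar>exp (-\<beta> * (norm (w + h))\<^sup>2) - exp (-\<beta> * (norm w)\<^sup>2)
            + 2 * \<beta> * exp (-\<beta> * (norm w)\<^sup>2) * (w \<bullet> h)\<bar> \<le> 3 * \<beta> * (norm h)\<^sup>2"
proof -
  define A where "A = w \<bullet> w"
  define B where "B = w \<bullet> h"
  define D where "D = h \<bullet> h"
  have nv: "(norm (w + t *\<^sub>R h))\<^sup>2 = A + 2*t*B + t\<^sup>2 * D" for t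
    unfolding power2_norm_eq_inner
    by (simp add: A_def B_def D_def inner_add_left inner_add_right
        inner_commute power2_eq_square algebra_simps)
  define g where "g t = exp (-\<beta> * (A + 2*t*B + t\<^sup>2 * D))" for t
  define g1 where "g1 t = -2*\<beta>*(B + t*D) * g t" for t
  define g2 where "g2 t = (4*\<beta>\<^sup>2*(B + t*D)\<^sup>2 - 2*\<beta>*D) * g t" for t
  define diff where "diff m = (if m = 0 then g else if m = 1 then g1 else g2)" for m :: nat
  have dg: "DERIV g t :> g1 t" for t
    unfolding g_def g1_def
    by (auto intro!: derivative_eq_intros simp: algebra_simps power2_eq_square)
  have dg1: "DERIV g1 t :> g2 t" for t
    unfolding g1_def g2_def g_def
    by (auto intro!: derivative_eq_intros simp: algebra_simps power2_eq_square)
  have "\<forall>m t. m < 2 \<and> 0 \<le> t \<and> t \<le> 1 \<longrightarrow> DERIV (diff m) t :> diff (Suc m) t"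
    using dg dg1 by (auto simp: diff_def less_2_cases_iff)
  from Maclaurin[of 1 2 diff g, OF _ _ _ this]
  obtain t :: real where t: "0 < t" "t < 1" "g 1 = (\<Sum>m<2. diff m 0 / fact m * 1 ^ m) + diff 2 t / fact 2 * 1 ^ 2"
    by (auto simp: diff_def)
  have eq: "g 1 = g 0 + g1 0 + g2 t / 2"
    using t(3) by (simp add: diff_def numeral_2_eq_2)
  define v where "v = w + t *\<^sub>R h"
  have gt: "g t = exp (-\<beta> * (norm v)\<^sup>2)" using nv[of t] by (simp add: g_def v_def)
  have BD: "B + t*D = v \<bullet> h" by (simp add: v_def B_def D_def inner_add_left)
  have cs: "(v \<bullet> h)\<^sup>2 \<le> (norm v)\<^sup>2 * (norm h)\<^sup>2"
    by (metis Cauchy_Schwarz_ineq2 abs_ge_zero norm_ge_zero power2_abs power_mono power_mult_distrib)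
  have Dn: "D = (norm h)\<^sup>2" by (simp add: D_def power2_norm_eq_inner)
  have g2b: "\<bar>g2 t\<bar> \<le> 6 * \<beta> * (norm h)\<^sup>2"
  proof -
    have e0: "0 < exp (-\<beta> * (norm v)\<^sup>2)" by simp
    have e1: "exp (-\<beta> * (norm v)\<^sup>2) \<le> 1" using b by (simp add: less_imp_le)
    have u: "(\<beta> * (norm v)\<^sup>2) * exp (-(\<beta> * (norm v)\<^sup>2)) \<le> 1"
      by (rule uexp_le) (use b in \<open>simp add: less_imp_le\<close>)
    have "\<bar>g2 t\<bar> \<le> (4*\<beta>\<^sup>2*(v \<bullet> h)\<^sup>2 + 2*\<beta>*D) * exp (-\<beta> * (norm v)\<^sup>2)"
    proof -
      have n1: "0 \<le> 4*\<beta>\<^sup>2*(v \<bullet> h)\<^sup>2" by simp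
      have n2: "0 \<le> 2*\<beta>*D" using b Dn by simp
      have "\<bar>4*\<beta>\<^sup>2*(v \<bullet> h)\<^sup>2 - 2*\<beta>*D\<bar> \<le> 4*\<beta>\<^sup>2*(v \<bullet> h)\<^sup>2 + 2*\<beta>*D"
        using n1 n2 by linarith
      then show ?thesis unfolding g2_def gt BD by (simp add: abs_mult)
    qed
    also have "\<dots> \<le> (4*\<beta>\<^sup>2*((norm v)\<^sup>2 * (norm h)\<^sup>2)) * exp (-\<beta> * (norm v)\<^sup>2) + 2*\<beta>*D"
    proof -
      have a1: "4*\<beta>\<^sup>2*(v \<bullet> h)\<^sup>2 * exp (-\<beta> * (norm v)\<^sup>2) \<le> 4*\<beta>\<^sup>2*((norm v)\<^sup>2 * (norm h)\<^sup>2) * exp (-\<beta> * (norm v)\<^sup>2)"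
        using cs e0 by (intro mult_right_mono mult_left_mono) auto
      have a2: "2*\<beta>*D * exp (-\<beta> * (norm v)\<^sup>2) \<le> 2*\<beta>*D"
        using e1 b Dn by (intro mult_left_le) auto
      show ?thesis using a1 a2 by (simp add: distrib_right)
    qed
    also have "\<dots> = 4*\<beta>*(norm h)\<^sup>2 * ((\<beta> * (norm v)\<^sup>2) * exp (-(\<beta> * (norm v)\<^sup>2))) + 2*\<beta>*(norm h)\<^sup>2"
      by (simp add: Dn power2_eq_square algebra_simps)
    also have "\<dots> \<le> 4*\<beta>*(norm h)\<^sup>2 * 1 + 2*\<beta>*(norm h)\<^sup>2"
      using u b by (intro add_right_mono mult_left_mono) auto
    finally show ?thesis by simp
  qed
  have g1': "g 1 = exp (-\<beta> * (norm (w + h))\<^sup>2)" using nv[of 1] by (simp add: g_def)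
  have g0': "g 0 = exp (-\<beta> * (norm w)\<^sup>2)" using nv[of 0] by (simp add: g_def)
  have "exp (-\<beta> * (norm (w + h))\<^sup>2) - exp (-\<beta> * (norm w)\<^sup>2)
            + 2 * \<beta> * exp (-\<beta> * (norm w)\<^sup>2) * (w \<bullet> h) = g2 t / 2"
    using eq g1' g0' by (simp add: g1_def B_def algebra_simps)
  then show ?thesis using g2b by simp
qed

lemma gd_eq: "s > 0 \<Longrightarrow> gauss_density s u =
   (2 * pi * s\<^sup>2) powr (- real DIM('a) / 2) * exp (- (1 / (2 * s\<^sup>2)) * (norm (u::'a::euclidean_space))\<^sup>2)"
  by (simp add: gauss_density_def)

lemma norm_exp_bound:
  fixes u :: "'a::euclidean_space"
  assumes b: "\<beta> > 0"
  shows "norm u * exp (-\<beta> * (norm u)\<^sup>2) \<le> 1 + 1/\<beta>"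
proof -
  have e1: "exp (-\<beta> * (norm u)\<^sup>2) \<le> 1" using b by (simp add: less_imp_le)
  have u: "(\<beta> * (norm u)\<^sup>2) * exp (-(\<beta> * (norm u)\<^sup>2)) \<le> 1"
    by (rule uexp_le) (use b in \<open>simp add: less_imp_le\<close>)
  then have u2: "(norm u)\<^sup>2 * exp (-\<beta> * (norm u)\<^sup>2) \<le> 1/\<beta>"
    using b by (simp add: field_simps)
  have sq: "0 \<le> (norm u - 1)\<^sup>2" by simp
  have "norm u \<le> 1 + (norm u)\<^sup>2"
  proof -
    have "(norm u - 1)\<^sup>2 = (norm u)\<^sup>2 - 2 * norm u + 1" by (simp add: power2_eq_square algebra_simps)
    then show ?thesis using sq norm_ge_zero[of u] by linarith
  qed
  then have "norm u * exp (-\<beta> * (norm u)\<^sup>2) \<le> (1 + (norm u)\<^sup>2) * exp (-\<beta> * (norm u)\<^sup>2)"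
    by (intro mult_right_mono) auto
  also have "\<dots> = exp (-\<beta> * (norm u)\<^sup>2) + (norm u)\<^sup>2 * exp (-\<beta> * (norm u)\<^sup>2)"
    by (simp add: algebra_simps)
  also have "\<dots> \<le> 1 + 1/\<beta>" using e1 u2 by linarith
  finally show ?thesis .
qed

lemma conv_main:
  fixes p :: "'a::euclidean_space \<Rightarrow> real" and s :: real and z :: 'a
  assumes pd: "prob_density p" and s: "s > 0"
  defines "P \<equiv> smoothed_density p s"
  defines "M \<equiv> (\<lambda>z. \<integral>x. (p x * gauss_density s (z - x)) *\<^sub>R x \<partial>lborel)"
  shows "P z > 0"
    and "(P has_derivative (\<lambda>h. ((1/s\<^sup>2) *\<^sub>R (M z - P z *\<^sub>R z)) \<bullet> h)) (at z)"
    and "MMSE p s z = (1 / P z) *\<^sub>R M z"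
proof -
  have pm[measurable]: "p \<in> borel_measurable lborel" and pn: "\<And>x. 0 \<le> p x"
    and pint: "integrable lborel p" and p1: "(\<integral>x. p x \<partial>lborel) = 1"
    using pd by (auto simp: prob_density_def)
  define c where "c = (2 * pi * s\<^sup>2) powr (- real DIM('a) / 2)"
  define \<beta> where "\<beta> = 1 / (2 * s\<^sup>2)"
  have c: "c > 0" using s by (simp add: c_def)
  have b: "\<beta> > 0" using s by (simp add: \<beta>_def)
  have sb: "1 / s\<^sup>2 = 2 * \<beta>" by (simp add: \<beta>_def)
  have gd: "\<And>u::'a. gauss_density s u = c * exp (-\<beta> * (norm u)\<^sup>2)"
    using s by (simp add: gauss_density_def c_def \<beta>_def)
  have meas: "(\<lambda>x. p x * gauss_density s (z' - x)) \<in> borel_measurable lborel" for z'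
    unfolding gd by measurable
  have I1: "integrable lborel (\<lambda>x. p x * gauss_density s (z' - x))" for z'
  proof (rule Bochner_Integration.integrable_bound[OF integrable_mult_right[OF pint, of c] meas])
    show "AE x in lborel. norm (p x * gauss_density s (z' - x)) \<le> norm (c * p x)"
    proof (rule AE_I2)
      fix x
      have e1: "exp (-\<beta> * (norm (z' - x))\<^sup>2) \<le> 1" using b by (simp add: less_imp_le)
      have "p x * (c * exp (-\<beta> * (norm (z' - x))\<^sup>2)) \<le> p x * (c * 1)"
        using e1 c pn[of x] by (intro mult_left_mono) auto
      then show "norm (p x * gauss_density s (z' - x)) \<le> norm (c * p x)"
        using c pn[of x] by (simp add: gd abs_mult mult.commute)
    qed
  qed
  define K where "K x = (p x * gauss_density s (z - x)) *\<^sub>R (x - z)" for x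
  have IK: "integrable lborel K"
  proof (rule Bochner_Integration.integrable_bound[OF integrable_mult_right[OF pint, of "c * (1 + 1/\<beta>)"]])
    show "K \<in> borel_measurable lborel" unfolding K_def gd by measurable
    show "AE x in lborel. norm (K x) \<le> norm (c * (1 + 1/\<beta>) * p x)"
    proof (rule AE_I2)
      fix x
      have nb: "norm (z - x) * exp (-\<beta> * (norm (z - x))\<^sup>2) \<le> 1 + 1/\<beta>"
        by (rule norm_exp_bound[OF b])
      have "norm (K x) = p x * c * (norm (z - x) * exp (-\<beta> * (norm (z - x))\<^sup>2))"
        using pn[of x] c by (simp add: K_def gd abs_mult norm_minus_commute)
      also have "\<dots> \<le> p x * c * (1 + 1/\<beta>)"
        using nb pn[of x] c by (intro mult_left_mono) auto
      also have "\<dots> = norm (c * (1 + 1/\<beta>) * p x)"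
        using pn[of x] c b by (simp add: abs_mult)
      finally show "norm (K x) \<le> norm (c * (1 + 1/\<beta>) * p x)" .
    qed
  qed
  show Ppos: "P z > 0"
  proof -
    have nn: "0 \<le> P z" unfolding P_def smoothed_density_def
      using pn c by (intro Bochner_Integration.integral_nonneg) (auto simp: gd)
    have "P z \<noteq> 0"
    proof
      assume "P z = 0"
      then have "AE x in lborel. p x * gauss_density s (z - x) = 0"
        unfolding P_def smoothed_density_def
        using integral_nonneg_eq_0_iff_AE[OF I1[of z]] pn c by (auto simp: gd)
      then have "AE x in lborel. p x = 0" using c by (auto simp: gd)
      then have "(\<integral>x. p x \<partial>lborel) = 0" by (rule integral_eq_zero_AE)
      then show False using p1 by simp
    qed
    then show ?thesis using nn by simp
  qed
  have Mz: "M z = integral\<^sup>L lborel K + P z *\<^sub>R z"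
  proof -
    have "M z = (\<integral>x. K x + (p x * gauss_density s (z - x)) *\<^sub>R z \<partial>lborel)"
      unfolding M_def K_def by (intro Bochner_Integration.integral_cong) (auto simp: algebra_simps)
    also have "\<dots> = integral\<^sup>L lborel K + (\<integral>x. (p x * gauss_density s (z - x)) *\<^sub>R z \<partial>lborel)"
      by (intro Bochner_Integration.integral_add IK integrable_scaleR_left I1)
    also have "\<dots> = integral\<^sup>L lborel K + P z *\<^sub>R z"
      using I1[of z] by (simp add: P_def smoothed_density_def)
    finally show ?thesis .
  qed
  define G where "G = (1/s\<^sup>2) *\<^sub>R integral\<^sup>L lborel K"
  have GM: "(1/s\<^sup>2) *\<^sub>R (M z - P z *\<^sub>R z) = G" by (simp add: Mz G_def)
  have Gh: "G \<bullet> h = (\<integral>x. (1/s\<^sup>2) * (K x \<bullet> h) \<partial>lborel)" for h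
    using IK by (simp add: G_def)
  have IKh: "integrable lborel (\<lambda>x. (1/s\<^sup>2) * (K x \<bullet> h))" for h
    by (intro integrable_mult_right integrable_inner_left IK)
  have rem: "\<bar>P y - P z - G \<bullet> (y - z)\<bar> \<le> 3 * \<beta> * c * (norm (y - z))\<^sup>2" for y
  proof -
    define h where "h = y - z"
    define R where "R x = p x * gauss_density s (y - x) - p x * gauss_density s (z - x) - (1/s\<^sup>2) * (K x \<bullet> h)" for x
    have "P y - P z - G \<bullet> h = integral\<^sup>L lborel R"
      unfolding R_def P_def smoothed_density_def Gh
      by (subst Bochner_Integration.integral_diff, intro Bochner_Integration.integrable_diff I1 IKh,
          rule IKh, subst Bochner_Integration.integral_diff, (rule I1)+, rule refl)
    also have "\<bar>\<dots>\<bar> \<le> (\<integral>x. 3 * \<beta> * c * (norm h)\<^sup>2 * p x \<partial>lborel)"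
    proof (rule Bochner_Integration.integral_norm_bound_integral[where f=R, unfolded real_norm_def])
      show "integrable lborel R" unfolding R_def
        by (intro Bochner_Integration.integrable_diff I1 IKh)
      show "integrable lborel (\<lambda>x. 3 * \<beta> * c * (norm h)\<^sup>2 * p x)"
        by (intro integrable_mult_right pint)
      fix x
      define w where "w = z - x"
      have yx: "y - x = w + h" by (simp add: w_def h_def)
      have Kh: "K x \<bullet> h = - p x * c * exp (-\<beta> * (norm w)\<^sup>2) * (w \<bullet> h)"
        by (simp add: K_def gd w_def norm_minus_commute inner_diff_left algebra_simps)
      have "R x = p x * c * (exp (-\<beta> * (norm (w + h))\<^sup>2) - exp (-\<beta> * (norm w)\<^sup>2)
            + 2 * \<beta> * exp (-\<beta> * (norm w)\<^sup>2) * (w \<bullet> h))"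
        unfolding R_def Kh sb yx by (simp add: gd w_def algebra_simps)
      then have "\<bar>R x\<bar> = p x * c * \<bar>exp (-\<beta> * (norm (w + h))\<^sup>2) - exp (-\<beta> * (norm w)\<^sup>2)
            + 2 * \<beta> * exp (-\<beta> * (norm w)\<^sup>2) * (w \<bullet> h)\<bar>"
        using pn[of x] c by (simp add: abs_mult)
      also have "\<dots> \<le> p x * c * (3 * \<beta> * (norm h)\<^sup>2)"
        using gauss_taylor[OF b, of w h] pn[of x] c by (intro mult_left_mono) auto
      finally show "\<bar>R x\<bar> \<le> 3 * \<beta> * c * (norm h)\<^sup>2 * p x" by (simp add: algebra_simps)
    qed
    also have "\<dots> = 3 * \<beta> * c * (norm h)\<^sup>2" using p1 by simp
    finally show ?thesis by (simp add: h_def)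
  qed
  have "(P has_derivative (\<lambda>h. G \<bullet> h)) (at z)"
    unfolding has_derivative_at_alt
  proof (intro conjI allI impI)
    show "bounded_linear ((\<bullet>) G)" by (rule bounded_linear_inner_right)
    fix e :: real assume e: "e > 0"
    define d where "d = e / (3 * \<beta> * c)"
    have d: "d > 0" using e b c by (simp add: d_def)
    show "\<exists>d>0. \<forall>y. norm (y - z) < d \<longrightarrow> norm (P y - P z - G \<bullet> (y - z)) \<le> e * norm (y - z)"
    proof (intro exI[of _ d] conjI allI impI d)
      fix y assume y: "norm (y - z) < d"
      have "3 * \<beta> * c * norm (y - z) \<le> e"
        using y b c by (simp add: d_def field_simps)
      then have "3 * \<beta> * c * (norm (y - z))\<^sup>2 \<le> e * norm (y - z)"
        by (simp add: power2_eq_square mult.assoc[symmetric] mult_right_mono)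
      then show "norm (P y - P z - G \<bullet> (y - z)) \<le> e * norm (y - z)" using rem[of y] by simp
    qed
  qed
  then show "(P has_derivative (\<lambda>h. ((1/s\<^sup>2) *\<^sub>R (M z - P z *\<^sub>R z)) \<bullet> h)) (at z)"
    by (simp add: GM)
  show "MMSE p s z = (1 / P z) *\<^sub>R M z"
  proof -
    have "MMSE p s z = (\<integral>x. (1 / P z) *\<^sub>R ((p x * gauss_density s (z - x)) *\<^sub>R x) \<partial>lborel)"
      unfolding MMSE_def P_def by (intro Bochner_Integration.integral_cong refl) simp
    also have "\<dots> = (1 / P z) *\<^sub>R M z"
      unfolding M_def by (rule integral_scaleR_right)
    finally show ?thesis .
  qed
qed

lemma grad_eqI:
  fixes f :: "'a::euclidean_space \<Rightarrow> real"
  assumes "(f has_derivative (\<lambda>h. g \<bullet> h)) (at z)"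
  shows "grad f z = g"
  unfolding grad_def
proof (rule the_equality)
  show "(f has_derivative (\<lambda>h. g \<bullet> h)) (at z)" by (rule assms)
  fix g' assume "(f has_derivative (\<lambda>h. g' \<bullet> h)) (at z)"
  from has_derivative_unique[OF this assms]
  have "g' \<bullet> (g' - g) = g \<bullet> (g' - g)" by metis
  then have "(g' - g) \<bullet> (g' - g) = 0" by (simp add: inner_diff_left)
  then show "g' = g" by simp
qed

lemma vec_alg0:
  fixes m y z :: "'a::real_vector" and b c t :: real
  assumes "c = 1 - b" "c * t = b"
  shows "b *\<^sub>R m + (1 - b) *\<^sub>R y = z - c *\<^sub>R ((z - y) - t *\<^sub>R (m - z))"
proof -
  have "z - c *\<^sub>R ((z - y) - t *\<^sub>R (m - z)) = z - c *\<^sub>R z + c *\<^sub>R y + (c*t) *\<^sub>R m - (c*t) *\<^sub>R z"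
    by (simp add: algebra_simps)
  also have "\<dots> = b *\<^sub>R m + (1 - b) *\<^sub>R y" unfolding assms(2) unfolding assms(1) by (simp add: algebra_simps)
  finally show ?thesis by simp
qed

lemma vec_alg:
  fixes m y z :: "'a::real_vector" and n :: real
  assumes "n \<ge> 0"
  shows "((n+1)/(n+2)) *\<^sub>R m + (1 - (n+1)/(n+2)) *\<^sub>R y
       = z - (1/(n+2)) *\<^sub>R ((z - y) - (n+1) *\<^sub>R (m - z))"
proof (rule vec_alg0)
  have a: "n + 2 \<noteq> 0" using assms by simp
  show "1 / (n + 2) = 1 - (n + 1) / (n + 2)" using a by (simp add: field_simps)
  show "1 / (n + 2) * (n + 1) = (n + 1) / (n + 2)" by simp
qed

theorem proposition1:
  fixes p :: "'a::euclidean_space \<Rightarrow> real" and \<tau> :: real and y :: 'a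
    and x :: "nat \<Rightarrow> 'a" and \<alpha> \<sigma> \<gamma> :: "nat \<Rightarrow> real"
    and F :: "nat \<Rightarrow> 'a \<Rightarrow> real"
  assumes "prob_density p"
    and "\<tau> > 0"
    and "\<And>k. \<alpha> k = (real k + 1) / (real k + 2)"
    and "\<And>k. \<sigma> k = sqrt (\<tau> / (real k + 1))"
    and "\<And>k. \<gamma> k = 1 / (real k + 2)"
    and "\<And>k z. F k z = (1/2) * (norm (y - z))\<^sup>2 - \<tau> * ln (smoothed_density p (\<sigma> k) z)"
    and "\<And>k. x (Suc k) = \<alpha> k *\<^sub>R MMSE p (\<sigma> k) (x k) + (1 - \<alpha> k) *\<^sub>R y"
  shows "\<forall>k. (F k has_derivative (\<lambda>h. grad (F k) (x k) \<bullet> h)) (at (x k))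
           \<and> x (Suc k) = x k - \<gamma> k *\<^sub>R grad (F k) (x k)"
proof
  fix k
  define s where "s = \<sigma> k"
  define z where "z = x k"
  define P where "P = smoothed_density p s"
  define M where "M = (\<lambda>z. \<integral>x. (p x * gauss_density s (z - x)) *\<^sub>R x \<partial>lborel)"
  have tk: "\<tau> / (real k + 1) > 0" using assms(2) by simp
  have s2: "s\<^sup>2 = \<tau> / (real k + 1)" using tk by (simp add: s_def assms(4))
  have s: "s > 0" using tk by (simp add: s_def assms(4))
  have Ppos: "P z > 0" and dP: "(P has_derivative (\<lambda>h. ((1/s\<^sup>2) *\<^sub>R (M z - P z *\<^sub>R z)) \<bullet> h)) (at z)"
    and mm: "MMSE p s z = (1 / P z) *\<^sub>R M z"
    using conv_main[OF assms(1) s, of z] by (simp_all add: P_def M_def)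
  define G where "G = (1/s\<^sup>2) *\<^sub>R (M z - P z *\<^sub>R z)"
  define g where "g = (z - y) - (\<tau> / P z) *\<^sub>R G"
  have Feq: "F k = (\<lambda>z. (1/2) * ((y - z) \<bullet> (y - z)) - \<tau> * ln (P z))"
    by (rule ext) (simp add: assms(6) P_def s_def power2_norm_eq_inner)
  have d1: "((\<lambda>z. (1/2) * ((y - z) \<bullet> (y - z))) has_derivative (\<lambda>h. (z - y) \<bullet> h)) (at z)"
    by (auto intro!: derivative_eq_intros simp: inner_commute algebra_simps inner_diff_left inner_diff_right)
  have d2: "((\<lambda>z. ln (P z)) has_derivative (\<lambda>h. (1 / P z) * (G \<bullet> h))) (at z)"
    using dP Ppos unfolding G_def
    by (auto intro!: derivative_eq_intros simp: field_simps)
  have dF: "(F k has_derivative (\<lambda>h. g \<bullet> h)) (at z)"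
  proof -
    have "(F k has_derivative (\<lambda>h. (z - y) \<bullet> h - \<tau> * ((1 / P z) * (G \<bullet> h)))) (at z)"
      unfolding Feq by (intro has_derivative_diff d1 has_derivative_mult_right d2)
    moreover have "(\<lambda>h. (z - y) \<bullet> h - \<tau> * ((1 / P z) * (G \<bullet> h))) = (\<lambda>h. g \<bullet> h)"
      by (rule ext) (simp add: g_def inner_diff_left)
    ultimately show ?thesis by simp
  qed
  have gr: "grad (F k) z = g" by (rule grad_eqI[OF dF])
  have gg: "g = (z - y) - (real k + 1) *\<^sub>R (MMSE p s z - z)"
  proof -
    have "(\<tau> / P z) *\<^sub>R G = ((\<tau> / P z) * (1/s\<^sup>2)) *\<^sub>R (M z - P z *\<^sub>R z)"
      by (simp add: G_def)
    also have "(\<tau> / P z) * (1/s\<^sup>2) = (real k + 1) * (1 / P z)"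
      unfolding s2 using Ppos assms(2) by (simp add: field_simps)
    also have "((real k + 1) * (1 / P z)) *\<^sub>R (M z - P z *\<^sub>R z) = (real k + 1) *\<^sub>R ((1 / P z) *\<^sub>R M z - (1 / P z) *\<^sub>R (P z *\<^sub>R z))"
      by (simp only: scaleR_scaleR[symmetric] scaleR_diff_right)
    also have "(1 / P z) *\<^sub>R (P z *\<^sub>R z) = z" using Ppos by simp
    finally have "(\<tau> / P z) *\<^sub>R G = (real k + 1) *\<^sub>R (MMSE p s z - z)" by (simp add: mm)
    then show ?thesis by (simp add: g_def)
  qed
  show "(F k has_derivative (\<lambda>h. grad (F k) (x k) \<bullet> h)) (at (x k))
           \<and> x (Suc k) = x k - \<gamma> k *\<^sub>R grad (F k) (x k)"
  proof
    show "(F k has_derivative (\<lambda>h. grad (F k) (x k) \<bullet> h)) (at (x k))"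
      using dF gr by (simp add: z_def)
    show "x (Suc k) = x k - \<gamma> k *\<^sub>R grad (F k) (x k)"
      unfolding assms(7) assms(3) assms(5) gr[unfolded z_def] gg[unfolded z_def]
      using vec_alg[of "real k" "MMSE p (\<sigma> k) (x k)" y "x k"] by (simp add: s_def)
  qed
qed

end
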